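(* Let $G$ be a nice graph with no two adjacent vertices of the same degree. If $\chi'_{qm}(G)=2$, then $\chi'_{qm\Sigma}(G)=2$.
   Context: All graphs are simple and finite. A $k$-edge-coloring of $G$ is any map $c:E(G)\to\{1,\dots,k\}$ (adjacent edges may share colors). It induces $\sigma_c(v)=\sum_{u\in N(v)}c(vu)$. The coloring is neighbor sum distinguishing (NSD) if $\sigma_c(u)\ne\sigma_c(v)$ for every edge $uv$. It is quasi-majority if every vertex $v$ is incident to at most $\lceil d(v)/2\rceil$ edges of each single color. $\chi'_{qm}(G)$ is the least $k$ such that $G$ has a quasi-majority $k$-edge-coloring, and $\chi'_{qm\Sigma}(G)$ the least $k$ such that $G$ has a $k$-edge-coloring that is both quasi-majority and NSD. A graph is nice if it has no connected component isomorphic to $K_2$. *)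

theory Defs
  imports Main
begin

definition simple_graph :: "'a set \<Rightarrow> 'a set set \<Rightarrow> bool" where
  "simple_graph V E \<longleftrightarrow> finite V \<and>
     (\<forall>e\<in>E. \<exists>u v. u \<noteq> v \<and> u \<in> V \<and> v \<in> V \<and> e = {u, v})"

definition nbrs :: "'a set set \<Rightarrow> 'a \<Rightarrow> 'a set" where
  "nbrs E v = {u. {v, u} \<in> E}"

definition deg :: "'a set set \<Rightarrow> 'a \<Rightarrow> nat" where
  "deg E v = card (nbrs E v)"

text \<open>Nice: no connected component isomorphic to K2, i.e. no edge both of whose
  endpoints have degree 1.\<close>
definition nice :: "'a set \<Rightarrow> 'a set set \<Rightarrow> bool" where
  "nice V E \<longleftrightarrow> \<not> (\<exists>u v. {u, v} \<in> E \<and> deg E u = 1 \<and> deg E v = 1)"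

definition edge_coloring :: "'a set set \<Rightarrow> nat \<Rightarrow> ('a set \<Rightarrow> nat) \<Rightarrow> bool" where
  "edge_coloring E k c \<longleftrightarrow> (\<forall>e\<in>E. c e \<in> {1..k})"

definition sigma :: "'a set set \<Rightarrow> ('a set \<Rightarrow> nat) \<Rightarrow> 'a \<Rightarrow> nat" where
  "sigma E c v = (\<Sum>u\<in>nbrs E v. c {v, u})"

definition nsd :: "'a set set \<Rightarrow> ('a set \<Rightarrow> nat) \<Rightarrow> bool" where
  "nsd E c \<longleftrightarrow> (\<forall>u v. {u, v} \<in> E \<longrightarrow> sigma E c u \<noteq> sigma E c v)"

text \<open>Quasi-majority: at most ceil(d(v)/2) = (d(v)+1) div 2 incident edges of each colour.\<close>
definition quasi_majority :: "'a set \<Rightarrow> 'a set set \<Rightarrow> ('a set \<Rightarrow> nat) \<Rightarrow> bool" where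
  "quasi_majority V E c \<longleftrightarrow>
     (\<forall>v\<in>V. \<forall>i. card {u \<in> nbrs E v. c {v, u} = i} \<le> (deg E v + 1) div 2)"

definition chi_qm :: "'a set \<Rightarrow> 'a set set \<Rightarrow> nat" where
  "chi_qm V E = (LEAST k. \<exists>c. edge_coloring E k c \<and> quasi_majority V E c)"

definition chi_qm_sigma :: "'a set \<Rightarrow> 'a set set \<Rightarrow> nat" where
  "chi_qm_sigma V E = (LEAST k. \<exists>c. edge_coloring E k c \<and> quasi_majority V E c \<and> nsd E c)"

end

theory Submission
  imports Defs
begin

lemma arith_aux:
  fixes a1 a2 d s :: nat
  assumes "a1 + a2 = d" "a1 \<le> (d+1) div 2" "a2 \<le> (d+1) div 2" "s = a1 + 2*a2"
  shows "3*d \<le> 2*s+1 \<and> 2*s \<le> 3*d+1"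
  using assms by presburger

lemma vsig:
  fixes f :: "'b \<Rightarrow> nat"
  assumes fin: "finite N" and col: "\<forall>w\<in>N. f w \<in> {1,2}"
    and qm: "\<forall>i. card {w\<in>N. f w = i} \<le> (card N+1) div 2"
  shows "3*card N \<le> 2*(\<Sum>w\<in>N. f w)+1 \<and> 2*(\<Sum>w\<in>N. f w) \<le> 3*card N+1"
proof -
  define A1 where "A1 = {w\<in>N. f w = 1}"
  define A2 where "A2 = {w\<in>N. f w = 2}"
  have U: "N = A1 \<union> A2" using col unfolding A1_def A2_def by auto
  have D: "A1 \<inter> A2 = {}" unfolding A1_def A2_def by auto
  have f1: "finite A1" "finite A2" using fin unfolding A1_def A2_def by auto
  have "(\<Sum>w\<in>N. f w) = (\<Sum>w\<in>A1. f w) + (\<Sum>w\<in>A2. f w)"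
    using U D f1 sum.union_disjoint by metis
  also have "\<dots> = card A1 + 2 * card A2"
    unfolding A1_def A2_def by simp
  finally have s: "(\<Sum>w\<in>N. f w) = card A1 + 2 * card A2" .
  have c: "card A1 + card A2 = card N" using U D f1 card_Un_disjoint by metis
  show ?thesis
    apply (rule arith_aux[OF c])
    using qm s unfolding A1_def A2_def by auto
qed

theorem mainTheorem16:
  fixes V :: "'a set" and E :: "'a set set"
  assumes "simple_graph V E"
    and "nice V E"
    and "\<forall>u v. {u, v} \<in> E \<longrightarrow> deg E u \<noteq> deg E v"
    and "chi_qm V E = 2"
  shows "chi_qm_sigma V E = 2"
proof -
  have finV: "finite V" using assms(1) unfolding simple_graph_def by auto
  have EV: "\<And>u v. {u,v} \<in> E \<Longrightarrow> u \<in> V \<and> v \<in> V"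
    using assms(1) unfolding simple_graph_def by (metis doubleton_eq_iff)
  have EsubPow: "E \<subseteq> Pow V" using assms(1) unfolding simple_graph_def by auto
  have finE: "finite E" using finite_subset[OF EsubPow] finV by auto
  have finN: "\<And>v. finite (nbrs E v)"
  proof -
    fix v
    have "nbrs E v \<subseteq> V" unfolding nbrs_def using EV by auto
    then show "finite (nbrs E v)" using finV finite_subset by auto
  qed
  obtain g n where g: "g ` E = {i::nat. i < n}" "inj_on g E"
    using finite_imp_inj_to_nat_seg[OF finE] by blast
  have exk: "\<exists>k c. edge_coloring E k c \<and> quasi_majority V E c"
  proof (intro exI conjI)
    show "edge_coloring E n (\<lambda>e. g e + 1)"
      unfolding edge_coloring_def
    proof
      fix e assume "e \<in> E"
      then have "g e < n" using g(1) by blast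
      then show "g e + 1 \<in> {1..n}" by simp
    qed
    show "quasi_majority V E (\<lambda>e. g e + 1)"
      unfolding quasi_majority_def
    proof (intro ballI allI)
      fix v i
      assume vV: "v \<in> V"
      let ?S = "{u \<in> nbrs E v. g {v, u} + 1 = i}"
      have sub: "?S \<subseteq> nbrs E v" by auto
      have le1: "card ?S \<le> 1"
      proof -
        have fS: "finite ?S" using finN[of v] by auto
        have "\<forall>x\<in>?S. \<forall>y\<in>?S. x = y"
        proof (intro ballI)
          fix x y assume x: "x \<in> ?S" and y: "y \<in> ?S"
          then have "{v,x} \<in> E" "{v,y} \<in> E" "g {v,x} = g {v,y}" unfolding nbrs_def by auto
          then have "{v,x} = {v,y}" using g(2) inj_on_def by metis
          then show "x = y" by (metis doubleton_eq_iff)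
        qed
        then show ?thesis using card_le_Suc0_iff_eq[OF fS] by simp
      qed
      show "card ?S \<le> (deg E v + 1) div 2"
      proof (cases "?S = {}")
        case True then show ?thesis by (simp only: card.empty)
      next
        case False
        then have "card ?S \<ge> 1" using finN[of v] by (simp add: Suc_le_eq card_gt_0_iff)
        then have "deg E v \<ge> 1" unfolding deg_def using card_mono[OF finN sub] by linarith
        then show ?thesis using le1 by linarith
      qed
    qed
  qed
  have L2: "(LEAST k. \<exists>c. edge_coloring E k c \<and> quasi_majority V E c) = 2"
    using assms(4) unfolding chi_qm_def .
  obtain c where c: "edge_coloring E 2 c" "quasi_majority V E c"
    using LeastI_ex[OF exk] L2 by auto
  have nsd: "nsd E c"
    unfolding nsd_def
  proof (intro allI impI)
    fix u v assume uv: "{u,v} \<in> E"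
    have bnd: "3*deg E x \<le> 2*sigma E c x+1 \<and> 2*sigma E c x \<le> 3*deg E x+1"
      if xV: "x \<in> V" for x
    proof -
      have "\<forall>w\<in>nbrs E x. c {x,w} \<in> {1,2}"
        using c(1) unfolding edge_coloring_def nbrs_def by auto
      moreover have "\<forall>i. card {w\<in>nbrs E x. c {x,w} = i} \<le> (card (nbrs E x)+1) div 2"
        using c(2) xV unfolding quasi_majority_def deg_def by auto
      ultimately show ?thesis
        using vsig[OF finN[of x], of "\<lambda>w. c {x,w}"] unfolding sigma_def deg_def by auto
    qed
    have "deg E u \<noteq> deg E v" using assms(3) uv by auto
    then show "sigma E c u \<noteq> sigma E c v"
      using bnd[of u] bnd[of v] EV[OF uv] by auto
  qed
  show ?thesis
    unfolding chi_qm_sigma_def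
  proof (rule Least_equality)
    show "\<exists>c. edge_coloring E 2 c \<and> quasi_majority V E c \<and> nsd E c" using c nsd by blast
  next
    fix y assume "\<exists>c. edge_coloring E y c \<and> quasi_majority V E c \<and> nsd E c"
    then have "\<exists>c. edge_coloring E y c \<and> quasi_majority V E c" by blast
    then show "2 \<le> y" using Least_le[of "\<lambda>k. \<exists>c. edge_coloring E k c \<and> quasi_majority V E c" y] L2 by auto
  qed
qed

end
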